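(* Assume Assumption 1 and Assumption 2 with $\delta>1/10$. For any distinct $u,u_1,u_2\in L$, as $n_R\to\infty$, $$\Pr[(u,u_1)\in E,\ (u,u_2)\in E\mid S_L,S_R]=\left(1+\frac{M_{R1}M_{R3}}{M_{R2}^2}\cdot\frac1{w_u}\right)p_{uu_1}p_{uu_2}\,(1+o(1)),$$ where $p_{xy}=\frac{M_{R2}}{M_{R1}^2}\cdot\frac{w_xw_y}{n_R}$.
   Context: Model: left nodes $L$ ($|L|=n_L$), right nodes $R$ ($|R|=n_R$), weight sequences $S_L=(w_u)_{u\in L}$, $S_R=(w_v)_{v\in R}$ of positive reals; $M_{Lk}=\frac1{n_L}\sum_{u\in L}w_u^k$, $M_{Rk}=\frac1{n_R}\sum_{v\in R}w_v^k$. The random bipartite graph $G_b=(L\sqcup R,E_b)$ contains each edge $(u,v)$, $u\in L$, $v\in R$, independently with probability $\min\left(\frac{w_uw_v}{n_RM_{R1}},1\right)$. The projected graph is $G=(L,E)$ with $(u,u')\in E$ for distinct $u,u'\in L$ iff there is $z\in R$ with $(u,z),(u',z)\in E_b$. Assumption 1: $\frac{w_uw_v}{n_RM_{R1}}\le1$ for all $u\in L,v\in R$. Assumption 2 (parameter $\delta>0$), as $n_L,n_R\to\infty$: $\max(S_L\cup S_R)=O(n_R^{1/2-\delta})$, $\min S_L=\Omega(1)$, $M_{R2}=O(M_{R1}^2)$, $M_{R4}=O(n_R^{1-2\delta})$. *)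

theory Defs
  imports "HOL-Probability.Probability" "HOL-Library.Landau_Symbols"
begin

text \<open>Nodes: L = {..<nL}, R = {..<nR}; weights are functions on node indices.\<close>

definition moment :: "nat \<Rightarrow> (nat \<Rightarrow> real) \<Rightarrow> nat \<Rightarrow> real" where
  "moment n w j = (\<Sum>i<n. w i ^ j) / real n"

definition edge_prob :: "nat \<Rightarrow> (nat \<Rightarrow> real) \<Rightarrow> (nat \<Rightarrow> real) \<Rightarrow> nat \<Rightarrow> nat \<Rightarrow> real" where
  "edge_prob nR wL wR u v = min (wL u * wR v / (real nR * moment nR wR 1)) 1"

definition bip_graph :: "nat \<Rightarrow> nat \<Rightarrow> (nat \<Rightarrow> real) \<Rightarrow> (nat \<Rightarrow> real) \<Rightarrow> (nat \<times> nat \<Rightarrow> bool) pmf" where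
  "bip_graph nL nR wL wR =
     Pi_pmf ({..<nL} \<times> {..<nR}) False (\<lambda>(u, v). bernoulli_pmf (edge_prob nR wL wR u v))"

definition proj_edge :: "nat \<Rightarrow> (nat \<times> nat \<Rightarrow> bool) \<Rightarrow> nat \<Rightarrow> nat \<Rightarrow> bool" where
  "proj_edge nR Eb u u' \<longleftrightarrow> u \<noteq> u' \<and> (\<exists>z<nR. Eb (u, z) \<and> Eb (u', z))"

definition p_proj :: "nat \<Rightarrow> (nat \<Rightarrow> real) \<Rightarrow> real \<Rightarrow> real \<Rightarrow> real" where
  "p_proj nR wR wx wy = moment nR wR 2 / (moment nR wR 1)^2 * (wx * wy / real nR)"

end

theory Submission
  imports Defs
begin


lemma measure_pair_pmf_times:
  "measure_pmf.prob (pair_pmf M N) (A \<times> B) = measure_pmf.prob M A * measure_pmf.prob N B"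
proof -
  have "measure_pmf.prob (pair_pmf M N) (A \<times> B)
      = measure_pmf.prob (pair_pmf M N) ((A \<times> B) \<inter> set_pmf (pair_pmf M N))"
    by (rule measure_Int_set_pmf[symmetric])
  also have "(A \<times> B) \<inter> set_pmf (pair_pmf M N) = (A \<inter> set_pmf M) \<times> (B \<inter> set_pmf N)"
    by auto
  also have "measure_pmf.prob (pair_pmf M N) \<dots> =
     measure_pmf.prob M (A \<inter> set_pmf M) * measure_pmf.prob N (B \<inter> set_pmf N)"
    by (rule measure_pmf_prob_product) (auto intro: countable_subset)
  finally show ?thesis by (simp add: measure_Int_set_pmf)
qed

lemma Pi_pmf_prod_blocks:
  fixes I :: "'i set" and Z :: "'z set" and p :: "'i \<times> 'z \<Rightarrow> 'b pmf"
    and Q :: "'z \<Rightarrow> ('i \<Rightarrow> 'b) \<Rightarrow> bool"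
  assumes I: "finite I" and Z: "finite Z"
    and cong: "\<And>z g g'. (\<And>i. i \<in> I \<Longrightarrow> g i = g' i) \<Longrightarrow> Q z g = Q z g'"
  shows "measure_pmf.prob (Pi_pmf (I \<times> Z) d p) {f. \<forall>z\<in>Z. Q z (\<lambda>i. f (i,z))}
       = (\<Prod>z\<in>Z. measure_pmf.prob (Pi_pmf (I \<times> {z}) d p) {f. Q z (\<lambda>i. f (i,z))})"
  using Z
proof (induction rule: finite_induct)
  case empty
  then show ?case by simp
next
  case (insert z Z)
  have split: "I \<times> insert z Z = (I \<times> {z}) \<union> (I \<times> Z)" by auto
  have disj: "(I \<times> {z}) \<inter> (I \<times> Z) = {}" using insert by auto
  define h where "h = (\<lambda>(f::'i \<times> 'z \<Rightarrow> 'b, g::'i \<times> 'z \<Rightarrow> 'b) x. if x \<in> I \<times> {z} then f x else g x)"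
  have U: "Pi_pmf (I \<times> insert z Z) d p = map_pmf h (pair_pmf (Pi_pmf (I \<times> {z}) d p) (Pi_pmf (I \<times> Z) d p))"
    unfolding split h_def using I insert disj by (intro Pi_pmf_union) auto
  have pre: "h -` {f. \<forall>z'\<in>insert z Z. Q z' (\<lambda>i. f (i,z'))}
     = {f. Q z (\<lambda>i. f (i,z))} \<times> {g. \<forall>z'\<in>Z. Q z' (\<lambda>i. g (i,z'))}"
  proof (intro set_eqI, clarify)
    fix f g
    have 1: "Q z (\<lambda>i. h (f,g) (i,z)) = Q z (\<lambda>i. f (i,z))"
      by (rule cong) (simp add: h_def)
    have 2: "(\<lambda>i. h (f,g) (i,z')) = (\<lambda>i. g (i,z'))" if "z' \<in> Z" for z'
      using that insert by (auto simp: h_def)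
    show "((f,g) \<in> h -` {f. \<forall>z'\<in>insert z Z. Q z' (\<lambda>i. f (i,z'))}) =
          ((f,g) \<in> {f. Q z (\<lambda>i. f (i,z))} \<times> {g. \<forall>z'\<in>Z. Q z' (\<lambda>i. g (i,z'))})"
      using 1 2 by auto
  qed
  show ?case
    unfolding U measure_map_pmf pre measure_pair_pmf_times insert.IH
    using insert by simp
qed

lemma prob_Pi3:
  assumes "x1 \<noteq> x2" "x1 \<noteq> x3" "x2 \<noteq> x3"
  shows "measure_pmf.prob (Pi_pmf {x1,x2,x3} d p) {f. f x1 \<in> S1 \<and> f x2 \<in> S2 \<and> f x3 \<in> S3}
    = measure_pmf.prob (p x1) S1 * measure_pmf.prob (p x2) S2 * measure_pmf.prob (p x3) S3"
proof -
  define B where "B = (\<lambda>x. if x = x1 then S1 else if x = x2 then S2 else S3)"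
  have "{f. f x1 \<in> S1 \<and> f x2 \<in> S2 \<and> f x3 \<in> S3} = Pi {x1,x2,x3} B"
    using assms by (auto simp: B_def Pi_def)
  moreover have "measure_pmf.prob (Pi_pmf {x1,x2,x3} d p) (Pi {x1,x2,x3} B)
     = (\<Prod>x\<in>{x1,x2,x3}. measure_pmf.prob (p x) (B x))"
    by (rule measure_Pi_pmf_Pi) simp
  ultimately show ?thesis using assms by (simp add: B_def)
qed




definition inv3 :: "real \<Rightarrow> real \<Rightarrow> real \<Rightarrow> real \<Rightarrow> real \<Rightarrow> real \<Rightarrow> real \<Rightarrow> bool" where
  "inv3 m \<alpha> \<beta> \<gamma> X Y T \<longleftrightarrow> 0 \<le> \<gamma> \<and> \<gamma> \<le> \<alpha> \<and> \<gamma> \<le> \<beta> \<and> \<alpha> \<le> 1 \<and> \<beta> \<le> 1 \<and>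
     1 - \<alpha> \<le> X \<and> 1 - \<beta> \<le> Y \<and> X - X^2 \<le> 1 - \<alpha> \<and> Y - Y^2 \<le> 1 - \<beta> \<and>
     0 \<le> 1 - \<alpha> - \<beta> + \<gamma> \<and> 1 - \<alpha> - \<beta> + \<gamma> \<le> T + X*Y \<and>
     T + X*Y - m*T - 2*(X+Y)*(T+X*Y) \<le> 1 - \<alpha> - \<beta> + \<gamma> \<and> 0 \<le> X \<and> 0 \<le> Y \<and> 0 \<le> T"

lemma inv3_step:
  assumes I: "inv3 m \<alpha> \<beta> \<gamma> X Y T"
    and a: "0 \<le> a" "a \<le> 1" "a \<le> m" and b: "0 \<le> b" "b \<le> 1" and c: "0 \<le> c" "c \<le> 1"
  shows "inv3 m (\<alpha>*(1-a*b)) (\<beta>*(1-a*c)) (\<gamma>*(1-a*b-a*c+a*b*c)) (X+a*b) (Y+a*c) (T+a*b*c)"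
proof -
  define x y t where "x = a*b" and "y = a*c" and "t = a*b*c"
  define P where "P = 1 - \<alpha> - \<beta> + \<gamma>"
  note I' = I[unfolded inv3_def, folded P_def]
  have x: "0 \<le> x" "x \<le> 1" unfolding x_def using a b by (auto simp: mult_le_one)
  have y: "0 \<le> y" "y \<le> 1" unfolding y_def using a c by (auto simp: mult_le_one)
  have t: "0 \<le> t" "t \<le> x" "t \<le> y"
  proof -
    show "0 \<le> t" unfolding t_def using a b c by simp
    have "a*b*c \<le> a*b*1" using a b c by (intro mult_left_mono) auto
    thus "t \<le> x" unfolding t_def x_def by simp
    have "a*b*c = (a*c)*b" by simp
    also have "\<dots> \<le> (a*c)*1" using a b c by (intro mult_left_mono) auto
    finally show "t \<le> y" unfolding t_def y_def by simp
  qed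
  have xy: "x*y \<le> m*t" unfolding x_def y_def t_def
  proof -
    have "a*b*(a*c) = a * (a*b*c)" by simp
    also have "\<dots> \<le> m * (a*b*c)" using a b c by (intro mult_right_mono) auto
    finally show "a*b*(a*c) \<le> m*(a*b*c)" .
  qed
  have g: "0 \<le> 1-x-y+t" unfolding x_def y_def t_def
  proof -
    have "1-a*b-a*c+a*b*c = (1-a) + a*((1-b)*(1-c))" by (simp add: algebra_simps)
    moreover have "0 \<le> (1-a) + a*((1-b)*(1-c))" using a b c by simp
    ultimately show "0 \<le> 1-a*b-a*c+a*b*c" by linarith
  qed
  have al: "0 \<le> \<alpha>" "0 \<le> \<beta>" using I' by linarith+
  have P0: "0 \<le> P" and PU: "P \<le> T + X*Y" using I' by auto
  have ga: "\<gamma> \<ge> 1 - X - Y" using I' unfolding P_def by linarith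
  have g1: "\<gamma> \<le> 1" using I' by linarith
  have new_gamma0: "0 \<le> \<gamma>*(1-x-y+t)" using I' g by simp
  have new_ga: "\<gamma>*(1-x-y+t) \<le> \<alpha>*(1-x)"
  proof -
    have "\<alpha>*(1-x) - \<gamma>*(1-x-y+t) = (\<alpha>-\<gamma>)*(1-x) + \<gamma>*(y-t)" by (simp add: algebra_simps)
    moreover have "(\<alpha>-\<gamma>)*(1-x) \<ge> 0" using I' x by simp
    moreover have "\<gamma>*(y-t) \<ge> 0" using I' t by simp
    ultimately show ?thesis by linarith
  qed
  have new_gb: "\<gamma>*(1-x-y+t) \<le> \<beta>*(1-y)"
  proof -
    have "\<beta>*(1-y) - \<gamma>*(1-x-y+t) = (\<beta>-\<gamma>)*(1-y) + \<gamma>*(x-t)" by (simp add: algebra_simps)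
    moreover have "(\<beta>-\<gamma>)*(1-y) \<ge> 0" using I' y by simp
    moreover have "\<gamma>*(x-t) \<ge> 0" using I' t by simp
    ultimately show ?thesis by linarith
  qed
  have na1: "\<alpha>*(1-x) \<le> 1" using al I' x by (smt (verit) mult_left_le)
  have nb1: "\<beta>*(1-y) \<le> 1" using al I' y by (smt (verit) mult_left_le)
  have na2: "1 - \<alpha>*(1-x) \<le> X + x"
  proof -
    have "\<alpha>*x \<le> x" using I' x by (simp add: mult_left_le_one_le)
    thus ?thesis using I' by (simp add: algebra_simps)
  qed
  have nb2: "1 - \<beta>*(1-y) \<le> Y + y"
  proof -
    have "\<beta>*y \<le> y" using I' y by (simp add: mult_left_le_one_le)
    thus ?thesis using I' by (simp add: algebra_simps)
  qed
  have na3: "(X+x) - (X+x)^2 \<le> 1 - \<alpha>*(1-x)"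
  proof -
    have "x*(1-2*X-x-\<alpha>) \<le> 0" using I' x by (intro mult_nonneg_nonpos) auto
    thus ?thesis using I' by (simp add: algebra_simps power2_eq_square)
  qed
  have nb3: "(Y+y) - (Y+y)^2 \<le> 1 - \<beta>*(1-y)"
  proof -
    have "y*(1-2*Y-y-\<beta>) \<le> 0" using I' y by (intro mult_nonneg_nonpos) auto
    thus ?thesis using I' by (simp add: algebra_simps power2_eq_square)
  qed
  define P' where "P' = 1 - \<alpha>*(1-x) - \<beta>*(1-y) + \<gamma>*(1-x-y+t)"
  have Pid: "P' = P + x*(\<alpha>-\<gamma>) + y*(\<beta>-\<gamma>) + t*\<gamma>"
    unfolding P'_def P_def by (simp add: algebra_simps)
  have ag: "\<alpha> - \<gamma> = 1 - \<beta> - P" "\<beta> - \<gamma> = 1 - \<alpha> - P" unfolding P_def by simp_all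
  have nP0: "0 \<le> P'" unfolding Pid using I' x y t P0 by simp
  have nPU: "P' \<le> (T+t) + (X+x)*(Y+y)"
  proof -
    have "x*(\<alpha>-\<gamma>) \<le> x*Y" unfolding ag using x P0 I' by (intro mult_left_mono) auto
    moreover have "y*(\<beta>-\<gamma>) \<le> y*X" unfolding ag using y P0 I' by (intro mult_left_mono) auto
    moreover have "t*\<gamma> \<le> t" using t g1 by (simp add: mult_left_le)
    moreover have "0 \<le> x*y" using x y by simp
    ultimately show ?thesis unfolding Pid using PU by (simp add: algebra_simps)
  qed
  have nPL: "(T+t) + (X+x)*(Y+y) - m*(T+t) - 2*((X+x)+(Y+y))*((T+t)+(X+x)*(Y+y)) \<le> P'"
  proof -
    define U where "U = T + X*Y"
    define L where "L = T + X*Y - m*T - 2*(X+Y)*(T+X*Y)"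
    have PL: "L \<le> P" using I' unfolding L_def by simp
    have e1: "x*(\<alpha>-\<gamma>) \<ge> x*Y - x*Y^2 - x*P"
    proof -
      have "x*(\<alpha>-\<gamma>) \<ge> x*(Y - Y^2 - P)" unfolding ag using x I' by (intro mult_left_mono) auto
      thus ?thesis by (simp add: algebra_simps)
    qed
    have e2: "y*(\<beta>-\<gamma>) \<ge> y*X - y*X^2 - y*P"
    proof -
      have "y*(\<beta>-\<gamma>) \<ge> y*(X - X^2 - P)" unfolding ag using y I' by (intro mult_left_mono) auto
      thus ?thesis by (simp add: algebra_simps)
    qed
    have e3: "t*\<gamma> \<ge> t - t*(X+Y)"
    proof -
      have "t*\<gamma> \<ge> t*(1-X-Y)" using t ga by (intro mult_left_mono) auto
      thus ?thesis by (simp add: algebra_simps)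
    qed
    have e4: "(x+y)*P \<le> (x+y)*U" unfolding U_def using PU x y by (intro mult_left_mono) auto
    have low: "P' \<ge> L - (x+y)*U + x*Y + y*X + t - x*Y^2 - y*X^2 - t*(X+Y)"
      unfolding Pid using e1 e2 e3 e4 PL by (simp add: algebra_simps)
    have X0: "0 \<le> X" "0 \<le> Y" "0 \<le> T" using I' by auto
    have U0: "0 \<le> U" unfolding U_def using X0 by simp
    have f1: "x*Y^2 \<le> (X+Y)*(x*Y)" using X0 x by (simp add: algebra_simps power2_eq_square)
    have f2: "y*X^2 \<le> (X+Y)*(y*X)" using X0 y by (simp add: algebra_simps power2_eq_square)
    define N where "N = (T+t)+(X+x)*(Y+y)"
    have E1: "(T+t) + (X+x)*(Y+y) - m*(T+t) - 2*((X+x)+(Y+y))*((T+t)+(X+x)*(Y+y))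
      = T + t + X*Y + x*Y + y*X + x*y - m*T - m*t - 2*((X+Y)*U)
        - 2*((X+Y)*t) - 2*((X+Y)*(x*Y)) - 2*((X+Y)*(y*X)) - 2*((X+Y)*(x*y)) - 2*((x+y)*N)"
      unfolding N_def U_def by (simp add: algebra_simps)
    have E2: "L = T + X*Y - m*T - 2*((X+Y)*U)" unfolding L_def U_def by simp
    have f3: "(x+y)*U \<le> (x+y)*N"
      unfolding U_def N_def using x y t X0
      by (intro mult_left_mono) (auto simp: algebra_simps intro!: add_nonneg_nonneg)
    have f4: "0 \<le> (X+Y)*(x*y)" using X0 x y by simp
    have f5: "0 \<le> (x+y)*U" using x y U0 by simp
    have f7: "t*(X+Y) = (X+Y)*t" by simp
    have f8: "0 \<le> (X+Y)*t" using X0 t by simp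
    have f9: "0 \<le> x*Y^2" "0 \<le> y*X^2" using x y by simp_all
    show ?thesis unfolding E1 using low E2 xy f1 f2 f3 f4 f5 f7 f8 f9 by linarith
  qed
  have "inv3 m (\<alpha>*(1-x)) (\<beta>*(1-y)) (\<gamma>*(1-x-y+t)) (X+x) (Y+y) (T+t)"
    unfolding inv3_def
    using new_gamma0 new_ga new_gb na1 nb1 na2 nb2 na3 nb3 nP0 nPU nPL I' x y t
    unfolding P'_def by (intro conjI) auto
  thus ?thesis unfolding x_def y_def t_def by simp
qed




lemma prob_compl_pmf: "measure_pmf.prob M (- A) = 1 - measure_pmf.prob M A"
  using measure_pmf.prob_compl[of A M] by (simp add: Compl_eq_Diff_UNIV)

lemma prob_False_bool: "measure_pmf.prob (M :: bool pmf) {False} = 1 - measure_pmf.prob M {True}"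
proof -
  have "{False} = - {True}" by auto
  thus ?thesis by (simp only: prob_compl_pmf)
qed

lemma prob_Un_disj_pmf: "A \<inter> B = {} \<Longrightarrow>
   measure_pmf.prob M (A \<union> B) = measure_pmf.prob M A + measure_pmf.prob M B"
  by (rule measure_pmf.finite_measure_Union) auto

lemma per_z_factors:
  fixes p :: "'a \<Rightarrow> bool pmf"
  assumes d: "x1 \<noteq> x2" "x1 \<noteq> x3" "x2 \<noteq> x3"
  defines "q1 \<equiv> measure_pmf.prob (p x1) {True}"
    and "q2 \<equiv> measure_pmf.prob (p x2) {True}"
    and "q3 \<equiv> measure_pmf.prob (p x3) {True}"
  shows "measure_pmf.prob (Pi_pmf {x1,x2,x3} d0 p) {f. \<not>(f x1 \<and> f x2)} = 1 - q1*q2"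
    and "measure_pmf.prob (Pi_pmf {x1,x2,x3} d0 p) {f. \<not>(f x1 \<and> f x3)} = 1 - q1*q3"
    and "measure_pmf.prob (Pi_pmf {x1,x2,x3} d0 p) {f. \<not>(f x1 \<and> f x2) \<and> \<not>(f x1 \<and> f x3)}
          = 1 - q1*q2 - q1*q3 + q1*q2*q3"
proof -
  let ?M = "Pi_pmf {x1,x2,x3} d0 p"
  have P: "measure_pmf.prob ?M {f. f x1 \<in> S1 \<and> f x2 \<in> S2 \<and> f x3 \<in> S3}
    = measure_pmf.prob (p x1) S1 * measure_pmf.prob (p x2) S2 * measure_pmf.prob (p x3) S3" for S1 S2 S3
    using prob_Pi3[OF d] .
  have F: "measure_pmf.prob (p x) {False} = 1 - measure_pmf.prob (p x) {True}" for x
    by (rule prob_False_bool)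
  have "{f. \<not>(f x1 \<and> f x2)} = {f. f x1 \<in> {False} \<and> f x2 \<in> UNIV \<and> f x3 \<in> UNIV}
      \<union> {f. f x1 \<in> {True} \<and> f x2 \<in> {False} \<and> f x3 \<in> UNIV}" by auto
  note e = this
  have "measure_pmf.prob ?M {f. \<not>(f x1 \<and> f x2)} = (1-q1) + q1*(1-q2)"
    unfolding e by (subst prob_Un_disj_pmf, blast, simp only: P) (simp add: F q1_def q2_def)
  thus "measure_pmf.prob ?M {f. \<not>(f x1 \<and> f x2)} = 1 - q1*q2" by (simp add: algebra_simps)
  have "{f. \<not>(f x1 \<and> f x3)} = {f. f x1 \<in> {False} \<and> f x2 \<in> UNIV \<and> f x3 \<in> UNIV}
      \<union> {f. f x1 \<in> {True} \<and> f x2 \<in> UNIV \<and> f x3 \<in> {False}}" by auto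
  note e = this
  have "measure_pmf.prob ?M {f. \<not>(f x1 \<and> f x3)} = (1-q1) + q1*(1-q3)"
    unfolding e by (subst prob_Un_disj_pmf, blast, simp only: P) (simp add: F q1_def q3_def)
  thus "measure_pmf.prob ?M {f. \<not>(f x1 \<and> f x3)} = 1 - q1*q3" by (simp add: algebra_simps)
  have "{f. \<not>(f x1 \<and> f x2) \<and> \<not>(f x1 \<and> f x3)} = {f. f x1 \<in> {False} \<and> f x2 \<in> UNIV \<and> f x3 \<in> UNIV}
      \<union> {f. f x1 \<in> {True} \<and> f x2 \<in> {False} \<and> f x3 \<in> {False}}" by auto
  note e = this
  have "measure_pmf.prob ?M {f. \<not>(f x1 \<and> f x2) \<and> \<not>(f x1 \<and> f x3)} = (1-q1) + q1*(1-q2)*(1-q3)"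
    unfolding e by (subst prob_Un_disj_pmf, blast, simp only: P) (simp add: F q1_def q2_def q3_def)
  thus "measure_pmf.prob ?M {f. \<not>(f x1 \<and> f x2) \<and> \<not>(f x1 \<and> f x3)}
          = 1 - q1*q2 - q1*q3 + q1*q2*q3" by (simp add: algebra_simps)
qed




lemma prob_Un_pmf: "measure_pmf.prob M (X \<union> Y) = measure_pmf.prob M X + measure_pmf.prob M Y - measure_pmf.prob M (X \<inter> Y)"
proof -
  have 1: "X \<union> Y = X \<union> (Y - X)" by auto
  have 2: "measure_pmf.prob M (X \<union> (Y - X)) = measure_pmf.prob M X + measure_pmf.prob M (Y - X)"
    by (rule prob_Un_disj_pmf) auto
  have 3: "Y = (Y \<inter> X) \<union> (Y - X)" by auto
  have 4: "measure_pmf.prob M ((Y \<inter> X) \<union> (Y - X)) = measure_pmf.prob M (Y \<inter> X) + measure_pmf.prob M (Y - X)"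
    by (rule prob_Un_disj_pmf) auto
  have 5: "X \<inter> Y = Y \<inter> X" by auto
  show ?thesis using 2 4 unfolding 1[symmetric] 3[symmetric] 5 by linarith
qed

lemma prob_formula:
  fixes nL n :: nat and wL wR :: "nat \<Rightarrow> real" and u u1 u2 :: nat
  assumes nodes: "u < nL" "u1 < nL" "u2 < nL" "u \<noteq> u1" "u \<noteq> u2" "u1 \<noteq> u2"
    and ep: "\<And>i z. i < nL \<Longrightarrow> z < n \<Longrightarrow> 0 \<le> edge_prob n wL wR i z"
  shows "measure_pmf.prob (bip_graph nL n wL wR) {Eb. proj_edge n Eb u u1 \<and> proj_edge n Eb u u2}
    = 1 - (\<Prod>z<n. 1 - edge_prob n wL wR u z * edge_prob n wL wR u1 z)
        - (\<Prod>z<n. 1 - edge_prob n wL wR u z * edge_prob n wL wR u2 z)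
        + (\<Prod>z<n. 1 - edge_prob n wL wR u z * edge_prob n wL wR u1 z
                    - edge_prob n wL wR u z * edge_prob n wL wR u2 z
                    + edge_prob n wL wR u z * edge_prob n wL wR u1 z * edge_prob n wL wR u2 z)"
proof -
  define e where "e = edge_prob n wL wR"
  define p where "p = (\<lambda>(i, v). bernoulli_pmf (e i v))"
  define I where "I = {u,u1,u2}"
  define D where "D = I \<times> {..<n}"
  define G where "G = bip_graph nL n wL wR"
  define H where "H = Pi_pmf D False p"
  define r where "r = (\<lambda>(f::nat\<times>nat\<Rightarrow>bool) x. if x \<in> D then f x else False)"
  have G: "G = Pi_pmf ({..<nL} \<times> {..<n}) False p"
    unfolding G_def bip_graph_def p_def e_def by simp
  have H: "H = map_pmf r G" unfolding H_def G r_def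
    by (rule Pi_pmf_subset) (use nodes in \<open>auto simp: D_def I_def\<close>)
  define A where "A = {f::nat\<times>nat\<Rightarrow>bool. \<exists>z<n. f (u,z) \<and> f (u1,z)}"
  define B where "B = {f::nat\<times>nat\<Rightarrow>bool. \<exists>z<n. f (u,z) \<and> f (u2,z)}"
  have ev: "{Eb. proj_edge n Eb u u1 \<and> proj_edge n Eb u u2} = A \<inter> B"
    unfolding A_def B_def proj_edge_def using nodes by auto
  have rA: "r -` (A \<inter> B) = A \<inter> B" unfolding r_def A_def B_def D_def I_def by auto
  have GH: "measure_pmf.prob G (A \<inter> B) = measure_pmf.prob H (A \<inter> B)"
    unfolding H measure_map_pmf rA ..
  have qT: "measure_pmf.prob (p (i, z)) {True} = e i z" if "i < nL" "z < n" for i z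
  proof -
    have "e i z \<le> 1" unfolding e_def edge_prob_def by simp
    thus ?thesis unfolding p_def using ep[OF that] by (simp add: measure_pmf_single e_def)
  qed
  have Iz: "I \<times> {z} = {(u,z),(u1,z),(u2,z)}" for z unfolding I_def by auto
  have blk: "measure_pmf.prob H {f. \<forall>z\<in>{..<n}. Q z (\<lambda>i. f (i,z))}
       = (\<Prod>z\<in>{..<n}. measure_pmf.prob (Pi_pmf (I \<times> {z}) False p) {f. Q z (\<lambda>i. f (i,z))})"
    if "\<And>z g g'. (\<And>i. i \<in> I \<Longrightarrow> g i = g' i) \<Longrightarrow> Q z g = Q z g'" for Q
    unfolding H_def D_def by (rule Pi_pmf_prod_blocks) (simp add: I_def, simp, rule that, blast)
  have d: "(u,z) \<noteq> (u1,z)" "(u,z) \<noteq> (u2,z)" "(u1,z) \<noteq> (u2,z)" for z :: nat using nodes by auto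
  have cA: "- A = {f. \<forall>z\<in>{..<n}. (\<lambda>g. \<not>(g u \<and> g u1)) (\<lambda>i. f (i,z))}" by (auto simp: A_def B_def)
  have cB: "- B = {f. \<forall>z\<in>{..<n}. (\<lambda>g. \<not>(g u \<and> g u2)) (\<lambda>i. f (i,z))}" by (auto simp: A_def B_def)
  have cAB: "- A \<inter> - B = {f. \<forall>z\<in>{..<n}. (\<lambda>g. \<not>(g u \<and> g u1) \<and> \<not>(g u \<and> g u2)) (\<lambda>i. f (i,z))}"
    by (auto simp: A_def B_def)
  have fA: "measure_pmf.prob (Pi_pmf (I \<times> {z}) False p) {f. \<not>(f (u,z) \<and> f (u1,z))} = 1 - e u z * e u1 z"
    if "z < n" for z
    unfolding Iz per_z_factors(1)[OF d] qT[OF nodes(1) that] qT[OF nodes(2) that] qT[OF nodes(3) that] ..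
  have fB: "measure_pmf.prob (Pi_pmf (I \<times> {z}) False p) {f. \<not>(f (u,z) \<and> f (u2,z))} = 1 - e u z * e u2 z"
    if "z < n" for z
    unfolding Iz per_z_factors(2)[OF d] qT[OF nodes(1) that] qT[OF nodes(2) that] qT[OF nodes(3) that] ..
  have fAB: "measure_pmf.prob (Pi_pmf (I \<times> {z}) False p) {f. \<not>(f (u,z) \<and> f (u1,z)) \<and> \<not>(f (u,z) \<and> f (u2,z))}
     = 1 - e u z * e u1 z - e u z * e u2 z + e u z * e u1 z * e u2 z"
    if "z < n" for z
    unfolding Iz per_z_factors(3)[OF d] qT[OF nodes(1) that] qT[OF nodes(2) that] qT[OF nodes(3) that] ..
  have PA: "measure_pmf.prob H (- A) = (\<Prod>z<n. 1 - e u z * e u1 z)"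
  proof -
    have "measure_pmf.prob H (- A) = (\<Prod>z\<in>{..<n}. measure_pmf.prob (Pi_pmf (I \<times> {z}) False p) {f. \<not>(f (u,z) \<and> f (u1,z))})"
      unfolding cA by (rule blk[of "\<lambda>z g. \<not>(g u \<and> g u1)"]) (auto simp: I_def)
    also have "\<dots> = (\<Prod>z<n. 1 - e u z * e u1 z)" by (intro prod.cong refl fA) simp
    finally show ?thesis .
  qed
  have PB: "measure_pmf.prob H (- B) = (\<Prod>z<n. 1 - e u z * e u2 z)"
  proof -
    have "measure_pmf.prob H (- B) = (\<Prod>z\<in>{..<n}. measure_pmf.prob (Pi_pmf (I \<times> {z}) False p) {f. \<not>(f (u,z) \<and> f (u2,z))})"
      unfolding cB by (rule blk[of "\<lambda>z g. \<not>(g u \<and> g u2)"]) (auto simp: I_def)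
    also have "\<dots> = (\<Prod>z<n. 1 - e u z * e u2 z)" by (intro prod.cong refl fB) simp
    finally show ?thesis .
  qed
  have PAB: "measure_pmf.prob H (- A \<inter> - B) = (\<Prod>z<n. 1 - e u z * e u1 z - e u z * e u2 z + e u z * e u1 z * e u2 z)"
  proof -
    have "measure_pmf.prob H (- A \<inter> - B) = (\<Prod>z\<in>{..<n}. measure_pmf.prob (Pi_pmf (I \<times> {z}) False p) {f. \<not>(f (u,z) \<and> f (u1,z)) \<and> \<not>(f (u,z) \<and> f (u2,z))})"
      unfolding cAB by (rule blk[of "\<lambda>z g. \<not>(g u \<and> g u1) \<and> \<not>(g u \<and> g u2)"]) (auto simp: I_def)
    also have "\<dots> = (\<Prod>z<n. 1 - e u z * e u1 z - e u z * e u2 z + e u z * e u1 z * e u2 z)" by (intro prod.cong refl fAB) simp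
    finally show ?thesis .
  qed
  have "measure_pmf.prob H (A \<inter> B) = 1 - measure_pmf.prob H (- (A \<inter> B))"
    by (simp only: prob_compl_pmf)
  also have "- (A \<inter> B) = - A \<union> - B" by auto
  also have "measure_pmf.prob H \<dots> = measure_pmf.prob H (- A) + measure_pmf.prob H (- B) - measure_pmf.prob H (- A \<inter> - B)"
    by (rule prob_Un_pmf)
  finally show ?thesis unfolding ev G_def[symmetric] GH PA PB PAB e_def by simp
qed




lemma inv3_prod:
  fixes a b c :: "'z \<Rightarrow> real" and m :: real
  assumes "finite Z"
    and h: "\<And>z. z \<in> Z \<Longrightarrow> 0 \<le> a z \<and> a z \<le> 1 \<and> a z \<le> m \<and> 0 \<le> b z \<and> b z \<le> 1 \<and> 0 \<le> c z \<and> c z \<le> 1"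
  shows "inv3 m (\<Prod>z\<in>Z. 1 - a z * b z) (\<Prod>z\<in>Z. 1 - a z * c z)
     (\<Prod>z\<in>Z. 1 - a z * b z - a z * c z + a z * b z * c z)
     (\<Sum>z\<in>Z. a z * b z) (\<Sum>z\<in>Z. a z * c z) (\<Sum>z\<in>Z. a z * b z * c z)"
  using assms
proof (induction rule: finite_induct)
  case empty
  then show ?case by (simp add: inv3_def)
next
  case (insert z Z)
  have hz: "0 \<le> a z" "a z \<le> 1" "a z \<le> m" "0 \<le> b z" "b z \<le> 1" "0 \<le> c z" "c z \<le> 1"
    using insert.prems[of z] by auto
  have IH: "inv3 m (\<Prod>z\<in>Z. 1 - a z * b z) (\<Prod>z\<in>Z. 1 - a z * c z)
     (\<Prod>z\<in>Z. 1 - a z * b z - a z * c z + a z * b z * c z)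
     (\<Sum>z\<in>Z. a z * b z) (\<Sum>z\<in>Z. a z * c z) (\<Sum>z\<in>Z. a z * b z * c z)"
    using insert.IH insert.prems by auto
  from inv3_step[OF IH hz] show ?case
    using insert.hyps by (simp add: mult.commute add.commute)
qed

lemma bounds_prod:
  fixes a b c :: "'z \<Rightarrow> real" and m :: real
  assumes "finite Z"
    and h: "\<And>z. z \<in> Z \<Longrightarrow> 0 \<le> a z \<and> a z \<le> 1 \<and> a z \<le> m \<and> 0 \<le> b z \<and> b z \<le> 1 \<and> 0 \<le> c z \<and> c z \<le> 1"
    and m: "0 \<le> m"
  defines "P \<equiv> 1 - (\<Prod>z\<in>Z. 1 - a z * b z) - (\<Prod>z\<in>Z. 1 - a z * c z)
     + (\<Prod>z\<in>Z. 1 - a z * b z - a z * c z + a z * b z * c z)"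
    and "X \<equiv> (\<Sum>z\<in>Z. a z * b z)" and "Y \<equiv> (\<Sum>z\<in>Z. a z * c z)" and "T \<equiv> (\<Sum>z\<in>Z. a z * b z * c z)"
  shows "P \<le> T + X*Y" "(T + X*Y) * (1 - m - 2*(X+Y)) \<le> P"
proof -
  have I: "inv3 m (\<Prod>z\<in>Z. 1 - a z * b z) (\<Prod>z\<in>Z. 1 - a z * c z)
     (\<Prod>z\<in>Z. 1 - a z * b z - a z * c z + a z * b z * c z) X Y T"
    unfolding X_def Y_def T_def by (rule inv3_prod[OF assms(1) h])
  note I' = I[unfolded inv3_def, folded P_def]
  show "P \<le> T + X*Y" using I' by simp
  have "m*T \<le> m*(T+X*Y)" using I' m by (intro mult_left_mono) auto
  moreover have "(T + X*Y) * (1 - m - 2*(X+Y)) = T + X*Y - m*(T+X*Y) - 2*(X+Y)*(T+X*Y)"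
    by (simp add: algebra_simps)
  ultimately show "(T + X*Y) * (1 - m - 2*(X+Y)) \<le> P" using I' by linarith
qed




lemma key_k:
  fixes nL n :: nat and wL wR :: "nat \<Rightarrow> real" and u u1 u2 :: nat
  assumes n: "n > 0"
    and nodes: "u < nL" "u1 < nL" "u2 < nL" "u \<noteq> u1" "u \<noteq> u2" "u1 \<noteq> u2"
    and posL: "\<And>i. i < nL \<Longrightarrow> wL i > 0"
    and posR: "\<And>j. j < n \<Longrightarrow> wR j > 0"
    and A1: "\<And>i j. i < nL \<Longrightarrow> j < n \<Longrightarrow> wL i * wR j / (real n * moment n wR 1) \<le> 1"
  defines "W \<equiv> Max (wL ` {..<nL} \<union> wR ` {..<n})"
    and "P \<equiv> measure_pmf.prob (bip_graph nL n wL wR) {Eb. proj_edge n Eb u u1 \<and> proj_edge n Eb u u2}"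
    and "tgt \<equiv> (1 + moment n wR 1 * moment n wR 3 / (moment n wR 2)^2 * (1 / wL u))
              * p_proj n wR (wL u) (wL u1) * p_proj n wR (wL u) (wL u2)"
    and "e \<equiv> (Max (wL ` {..<nL} \<union> wR ` {..<n}))^2 * moment n wR 2 / ((moment n wR 1)^2 * real n)"
  shows "0 < tgt" "P \<le> tgt" "tgt * (1 - sqrt e - 4*e) \<le> P" "0 \<le> e"
proof -
  define s where "s = (\<Sum>z<n. wR z)"
  define S2 where "S2 = (\<Sum>z<n. wR z ^ 2)"
  define S3 where "S3 = (\<Sum>z<n. wR z ^ 3)"
  have pk: "wR z ^ k > 0" if "z < n" for z k using posR[OF that] by simp
  have s0: "s > 0" unfolding s_def using n posR by (intro sum_pos) auto
  have S20: "S2 > 0" unfolding S2_def using n by (intro sum_pos pk) auto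
  have S30: "S3 > 0" unfolding S3_def using n by (intro sum_pos pk) auto
  have M1: "moment n wR 1 = s / n" unfolding moment_def s_def by simp
  have M2: "moment n wR 2 = S2 / n" unfolding moment_def S2_def by simp
  have M3: "moment n wR 3 = S3 / n" unfolding moment_def S3_def by simp
  have nM1: "real n * moment n wR 1 = s" unfolding M1 using n by simp
  define wu where "wu = wL u"
  define w1 where "w1 = wL u1"
  define w2 where "w2 = wL u2"
  have wpos: "wu > 0" "w1 > 0" "w2 > 0" unfolding wu_def w1_def w2_def using nodes posL by auto
  define a where "a = (\<lambda>z. wu * wR z / s)"
  define b where "b = (\<lambda>z. w1 * wR z / s)"
  define c where "c = (\<lambda>z. w2 * wR z / s)"
  have ep: "edge_prob n wL wR i z = wL i * wR z / s" if "i < nL" "z < n" for i z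
    using A1[OF that] unfolding edge_prob_def nM1 by simp
  have epa: "edge_prob n wL wR u z = a z" "edge_prob n wL wR u1 z = b z" "edge_prob n wL wR u2 z = c z"
    if "z < n" for z
    using ep[OF _ that] nodes unfolding a_def b_def c_def wu_def w1_def w2_def by auto
  have Pf: "P = 1 - (\<Prod>z<n. 1 - a z * b z) - (\<Prod>z<n. 1 - a z * c z)
        + (\<Prod>z<n. 1 - a z * b z - a z * c z + a z * b z * c z)"
  proof -
    have "P = 1 - (\<Prod>z<n. 1 - edge_prob n wL wR u z * edge_prob n wL wR u1 z)
        - (\<Prod>z<n. 1 - edge_prob n wL wR u z * edge_prob n wL wR u2 z)
        + (\<Prod>z<n. 1 - edge_prob n wL wR u z * edge_prob n wL wR u1 z
                    - edge_prob n wL wR u z * edge_prob n wL wR u2 z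
                    + edge_prob n wL wR u z * edge_prob n wL wR u1 z * edge_prob n wL wR u2 z)"
      unfolding P_def
    proof (rule prob_formula[OF nodes])
      fix i z assume "i < nL" "z < n"
      show "0 \<le> edge_prob n wL wR i z"
        using ep[OF \<open>i < nL\<close> \<open>z < n\<close>] posL[OF \<open>i < nL\<close>] posR[OF \<open>z < n\<close>] s0 by simp
    qed
    also have "\<dots> = 1 - (\<Prod>z<n. 1 - a z * b z) - (\<Prod>z<n. 1 - a z * c z)
        + (\<Prod>z<n. 1 - a z * b z - a z * c z + a z * b z * c z)"
      by (intro arg_cong2[where f="(+)"] arg_cong2[where f="(-)"] refl prod.cong) (auto simp: epa)
    finally show ?thesis .
  qed
  define W where "W = Max (wL ` {..<nL} \<union> wR ` {..<n})"
  have e_W: "e = W^2 * moment n wR 2 / ((moment n wR 1)^2 * real n)" unfolding e_def W_def ..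
  have fin: "finite (wL ` {..<nL} \<union> wR ` {..<n})" by simp
  have WL: "wL i \<le> W" if "i < nL" for i unfolding W_def using that by (intro Max_ge fin) auto
  have W0: "0 \<le> W" using WL[OF nodes(1)] wpos unfolding wu_def by linarith
  have e_eq: "e = W^2 * S2 / s^2" unfolding e_W M1 M2 using n by (simp add: field_simps power2_eq_square)
  have X_eq: "(\<Sum>z<n. a z * b z) = wu*w1*S2/s^2"
    unfolding S2_def sum_distrib_left sum_divide_distrib a_def b_def
    by (intro sum.cong refl) (simp add: field_simps power2_eq_square)
  have Y_eq: "(\<Sum>z<n. a z * c z) = wu*w2*S2/s^2"
    unfolding S2_def sum_distrib_left sum_divide_distrib a_def c_def
    by (intro sum.cong refl) (simp add: field_simps power2_eq_square)
  have T_eq: "(\<Sum>z<n. a z * b z * c z) = wu*w1*w2*S3/s^3"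
    unfolding S3_def sum_distrib_left sum_divide_distrib a_def b_def c_def
    by (intro sum.cong refl) (simp add: field_simps power3_eq_cube)
  have pp1: "p_proj n wR wu w1 = wu*w1*S2/s^2" unfolding p_proj_def M1 M2 using n s0
    by (simp add: field_simps power2_eq_square)
  have pp2: "p_proj n wR wu w2 = wu*w2*S2/s^2" unfolding p_proj_def M1 M2 using n s0
    by (simp add: field_simps power2_eq_square)
  have tgt_eq: "tgt = wu*w1*w2*S3/s^3 + (wu*w1*S2/s^2) * (wu*w2*S2/s^2)"
    unfolding tgt_def wu_def[symmetric] w1_def[symmetric] w2_def[symmetric] pp1 pp2 M1 M2 M3
    using n s0 S20 wpos by (simp add: field_simps power2_eq_square power3_eq_cube)
  show tg0: "0 < tgt" unfolding tgt_eq using s0 S20 S30 wpos by (intro add_pos_pos divide_pos_pos mult_pos_pos zero_less_power) auto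
  show "0 \<le> e" unfolding e_eq using S20 by simp
  have le1: "wL i * wR z / s \<le> 1" if "i < nL" "z < n" for i z
    using A1[OF that] unfolding nM1 .
  have wRS2: "wR z ^ 2 \<le> S2" if "z < n" for z
    unfolding S2_def using that by (intro member_le_sum) auto
  have wW: "wu \<le> W" "w1 \<le> W" "w2 \<le> W" unfolding wu_def w1_def w2_def using WL nodes by auto
  have asq: "a z \<le> sqrt e" if "z < n" for z
  proof (rule real_le_rsqrt)
    have "wu^2 * wR z^2 \<le> W^2 * S2"
      using wpos wW wRS2[OF that] by (intro mult_mono power_mono) auto
    hence "wu^2 * wR z^2 / s^2 \<le> W^2 * S2 / s^2" by (intro divide_right_mono) auto
    thus "(a z)^2 \<le> e" unfolding e_eq a_def by (simp add: power_divide power_mult_distrib)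
  qed
  have Xe: "wu*w1*S2/s^2 \<le> e" "wu*w2*S2/s^2 \<le> e"
  proof -
    have "wu*w1 \<le> W*W" "wu*w2 \<le> W*W" using wpos wW by (intro mult_mono; simp)+
    hence "wu*w1*S2 \<le> W^2*S2" "wu*w2*S2 \<le> W^2*S2" using S20
      by (simp_all add: power2_eq_square mult_right_mono)
    thus "wu*w1*S2/s^2 \<le> e" "wu*w2*S2/s^2 \<le> e" unfolding e_eq by (simp_all add: divide_right_mono)
  qed
  have hb: "0 \<le> a z \<and> a z \<le> 1 \<and> a z \<le> sqrt e \<and> 0 \<le> b z \<and> b z \<le> 1 \<and> 0 \<le> c z \<and> c z \<le> 1"
    if "z \<in> {..<n}" for z
  proof -
    have z: "z < n" using that by simp
    show ?thesis using le1[OF nodes(1) z] le1[OF nodes(2) z] le1[OF nodes(3) z] asq[OF z]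
        wpos posR[OF z] s0 unfolding a_def b_def c_def wu_def w1_def w2_def by simp
  qed
  have se: "0 \<le> sqrt e" using S20 unfolding e_eq by simp
  note B = bounds_prod[of "{..<n}" a "sqrt e" b c, OF _ hb se, simplified]
  show "P \<le> tgt" unfolding Pf tgt_eq using B(1) unfolding X_eq Y_eq T_eq .
  have "tgt * (1 - sqrt e - 4*e) \<le> tgt * (1 - sqrt e - 2*(wu*w1*S2/s^2 + wu*w2*S2/s^2))"
    using Xe tg0 by (intro mult_left_mono) auto
  also have "\<dots> \<le> P" unfolding Pf tgt_eq using B(2) unfolding X_eq Y_eq T_eq by (simp only: distrib_left)
  finally show "tgt * (1 - sqrt e - 4*e) \<le> P" .
qed




lemma powr_bound_aux:
  fixes x d :: real assumes "x > 0"
  shows "(x powr (1/2 - d))^2 / x = x powr (-2*d)"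
proof -
  have "(x powr (1/2 - d))^2 = x powr (1 - 2*d)"
    by (simp add: power2_eq_square powr_add[symmetric])
  also have "\<dots> = x * x powr (-2*d)" using powr_add[of x 1 "-2*d"] assms by simp
  finally show ?thesis using assms by simp
qed

theorem mainTheorem7:
  fixes nL nR :: "nat \<Rightarrow> nat" and wL wR :: "nat \<Rightarrow> nat \<Rightarrow> real"
    and \<delta> :: real and u u1 u2 :: "nat \<Rightarrow> nat"
  assumes delta: "\<delta> > 1/10"
    and nL_lim: "filterlim nL at_top sequentially"
    and nR_lim: "filterlim nR at_top sequentially"
    and posL: "\<forall>k i. i < nL k \<longrightarrow> wL k i > 0"
    and posR: "\<forall>k j. j < nR k \<longrightarrow> wR k j > 0"
    and A1: "\<forall>k i j. i < nL k \<longrightarrow> j < nR k \<longrightarrow>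
               wL k i * wR k j / (real (nR k) * moment (nR k) (wR k) 1) \<le> 1"
    and A2_max: "(\<lambda>k. Max (wL k ` {..<nL k} \<union> wR k ` {..<nR k}))
                   \<in> O(\<lambda>k. real (nR k) powr (1/2 - \<delta>))"
    and A2_min: "(\<lambda>k. Min (wL k ` {..<nL k})) \<in> \<Omega>(\<lambda>k. 1)"
    and A2_M2: "(\<lambda>k. moment (nR k) (wR k) 2) \<in> O(\<lambda>k. (moment (nR k) (wR k) 1)^2)"
    and A2_M4: "(\<lambda>k. moment (nR k) (wR k) 4) \<in> O(\<lambda>k. real (nR k) powr (1 - 2*\<delta>))"
    and nodes: "eventually (\<lambda>k. u k < nL k \<and> u1 k < nL k \<and> u2 k < nL k \<and>
                  u k \<noteq> u1 k \<and> u k \<noteq> u2 k \<and> u1 k \<noteq> u2 k) sequentially"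
  shows "(\<lambda>k. measure_pmf.prob (bip_graph (nL k) (nR k) (wL k) (wR k))
              {Eb. proj_edge (nR k) Eb (u k) (u1 k) \<and> proj_edge (nR k) Eb (u k) (u2 k)})
         \<sim>[sequentially]
         (\<lambda>k. (1 + moment (nR k) (wR k) 1 * moment (nR k) (wR k) 3 / (moment (nR k) (wR k) 2)^2
                   * (1 / wL k (u k)))
              * p_proj (nR k) (wR k) (wL k (u k)) (wL k (u1 k))
              * p_proj (nR k) (wR k) (wL k (u k)) (wL k (u2 k)))"
proof -
  define P where "P = (\<lambda>k. measure_pmf.prob (bip_graph (nL k) (nR k) (wL k) (wR k))
              {Eb. proj_edge (nR k) Eb (u k) (u1 k) \<and> proj_edge (nR k) Eb (u k) (u2 k)})"
  define tgt where "tgt = (\<lambda>k. (1 + moment (nR k) (wR k) 1 * moment (nR k) (wR k) 3 / (moment (nR k) (wR k) 2)^2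
                   * (1 / wL k (u k)))
              * p_proj (nR k) (wR k) (wL k (u k)) (wL k (u1 k))
              * p_proj (nR k) (wR k) (wL k (u k)) (wL k (u2 k)))"
  define W where "W = (\<lambda>k. Max (wL k ` {..<nL k} \<union> wR k ` {..<nR k}))"
  define e where "e = (\<lambda>k. (W k)^2 * moment (nR k) (wR k) 2 / ((moment (nR k) (wR k) 1)^2 * real (nR k)))"
  from A2_max obtain C where C: "C > 0"
    "eventually (\<lambda>k. norm (W k) \<le> C * norm (real (nR k) powr (1/2 - \<delta>))) sequentially"
    unfolding W_def by (elim landau_o.bigE)
  from A2_M2 obtain C2 where C2: "C2 > 0"
    "eventually (\<lambda>k. norm (moment (nR k) (wR k) 2) \<le> C2 * norm ((moment (nR k) (wR k) 1)^2)) sequentially"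
    by (elim landau_o.bigE)
  have nRr: "filterlim (\<lambda>k. real (nR k)) at_top sequentially"
    by (rule filterlim_compose[OF filterlim_real_sequentially nR_lim])
  have npos: "eventually (\<lambda>k. nR k > 0) sequentially"
  proof -
    have "eventually (\<lambda>k. 1 \<le> nR k) sequentially" using nR_lim unfolding filterlim_at_top by blast
    thus ?thesis by (rule eventually_mono) simp
  qed
  have good: "eventually (\<lambda>k. 0 < tgt k \<and> P k \<le> tgt k \<and> tgt k * (1 - sqrt (e k) - 4 * e k) \<le> P k
      \<and> 0 \<le> e k \<and> e k \<le> C^2 * C2 * real (nR k) powr (-2*\<delta>)) sequentially"
    using npos nodes C(2) C2(2)
  proof eventually_elim
    case (elim k)
    note kk = key_k[of "nR k" "u k" "nL k" "u1 k" "u2 k" "wL k" "wR k"]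
    have K: "0 < tgt k" "P k \<le> tgt k" "tgt k * (1 - sqrt (e k) - 4 * e k) \<le> P k" "0 \<le> e k"
      using kk elim posL posR A1 unfolding tgt_def P_def e_def W_def by auto
    define n where "n = real (nR k)"
    define M1 where "M1 = moment (nR k) (wR k) 1"
    define M2 where "M2 = moment (nR k) (wR k) 2"
    have n0: "n > 0" unfolding n_def using elim by simp
    have M1pos: "M1 > 0" unfolding M1_def moment_def using elim posR
      by (intro divide_pos_pos sum_pos) auto
    have W0: "0 \<le> W k" unfolding W_def
    proof -
      have "wL k (u k) \<le> Max (wL k ` {..<nL k} \<union> wR k ` {..<nR k})" using elim by (intro Max_ge) auto
      moreover have "wL k (u k) > 0" using posL elim by auto
      ultimately show "0 \<le> Max (wL k ` {..<nL k} \<union> wR k ` {..<nR k})" by linarith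
    qed
    have WC: "W k \<le> C * n powr (1/2 - \<delta>)" using elim(3) unfolding n_def by simp
    have MC: "M2 \<le> C2 * M1^2" using elim(4) unfolding M1_def M2_def by simp
    have "e k = (W k)^2 * M2 / (M1^2 * n)" unfolding e_def M1_def M2_def n_def ..
    also have "\<dots> \<le> (W k)^2 * (C2 * M1^2) / (M1^2 * n)"
      using MC n0 M1pos by (intro divide_right_mono mult_left_mono) auto
    also have "\<dots> = C2 * ((W k)^2 / n)" using M1pos by (simp add: field_simps)
    also have "\<dots> \<le> C2 * ((C * n powr (1/2 - \<delta>))^2 / n)"
      using WC W0 n0 C2(1) by (intro mult_left_mono divide_right_mono power_mono) auto
    also have "\<dots> = C^2 * C2 * ((n powr (1/2 - \<delta>))^2 / n)" by (simp add: power_mult_distrib)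
    also have "\<dots> = C^2 * C2 * n powr (-2*\<delta>)" using powr_bound_aux[OF n0] by simp
    finally show ?case using K unfolding n_def by simp
  qed
  have lim0: "((\<lambda>k. C^2 * C2 * real (nR k) powr (-2*\<delta>)) \<longlongrightarrow> 0) sequentially"
  proof -
    have "((\<lambda>k. real (nR k) powr (-2*\<delta>)) \<longlongrightarrow> 0) sequentially"
      by (rule tendsto_neg_powr[OF _ nRr]) (use delta in simp)
    thus ?thesis by (rule tendsto_mult_right_zero)
  qed
  have e0: "(e \<longlongrightarrow> 0) sequentially"
  proof (rule tendsto_sandwich[OF _ _ tendsto_const lim0])
    show "eventually (\<lambda>k. 0 \<le> e k) sequentially" using good by (rule eventually_mono) simp
    show "eventually (\<lambda>k. e k \<le> C^2 * C2 * real (nR k) powr (-2*\<delta>)) sequentially"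
      using good by (rule eventually_mono) simp
  qed
  have g1: "((\<lambda>k. 1 - sqrt (e k) - 4 * e k) \<longlongrightarrow> 1) sequentially"
  proof -
    have "((\<lambda>k. 1 - sqrt (e k) - 4 * e k) \<longlongrightarrow> 1 - sqrt 0 - 4 * 0) sequentially"
      by (intro tendsto_intros e0)
    thus ?thesis by simp
  qed
  have ratio: "((\<lambda>k. P k / tgt k) \<longlongrightarrow> 1) sequentially"
  proof (rule tendsto_sandwich[OF _ _ g1 tendsto_const])
    show "eventually (\<lambda>k. 1 - sqrt (e k) - 4 * e k \<le> P k / tgt k) sequentially"
      using good by (rule eventually_mono) (simp add: pos_le_divide_eq mult.commute)
    show "eventually (\<lambda>k. P k / tgt k \<le> 1) sequentially"
      using good by (rule eventually_mono) simp
  qed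
  have "P \<sim>[sequentially] tgt" by (rule asymp_equivI'[OF ratio])
  thus ?thesis unfolding P_def tgt_def .
qed


end
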